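(* Let $F=(n_F)_{n\ge1}$ be a sequence in the family $\mathcal{T}_\lambda$. Let $n\in\mathbb{N}$, and let $(b_1,\dots,b_k)$ be any composition of $n$ into positive parts. Then the $F$-box $V_{n,n}=[1_F]\times[2_F]\times\cdots\times[n_F]$ can be partitioned into pairwise disjoint multi-blocks, each of the form $\sigma P_{b_1,\dots,b_k}$ for some permutation $\sigma$ (which may depend on the block).
   Context: Throughout, $\mathbb{N}=\{1,2,\dots\}$ and $[s_F]=\{1,\dots,s_F\}$. The family $\mathcal{T}_\lambda$ consists of sequences $F=(n_F)_{n\ge1}$ of natural numbers for which there exist functions $\lambda_K,\lambda_M:\mathbb{N}\times\mathbb{N}\to\mathbb{N}\cup\{0\}$ such that $(k+m)_F=\lambda_K(k,m)\,k_F+\lambda_M(k,m)\,m_F$ for all $k,m\in\mathbb{N}$. Multi-block: given a composition $(b_1,\dots,b_k)$ of $n$ (so $b_i\ge1$ and $b_1+\dots+b_k=n$), let $L^0=(1,2,\dots,b_1,1,2,\dots,b_2,\dots,1,2,\dots,b_k)$, a vector of length $n$. For a permutation $\sigma$ of $\{1,\dots,n\}$, let $L_s=L^0_{\sigma(s)}$. A multi-block of the form $\sigma P_{b_1,\dots,b_k}$ is a set $A_1\times\cdots\times A_n$ with $A_s\subseteq[s_F]$ and $|A_s|=(L_s)_F$ for $s=1,\dots,n$. In cobweb language, this is a sub-layer of $\langle\Phi_1\to\Phi_n\rangle$, and its points correspond to maximal paths. *)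

theory Defs
  imports "HOL-Combinatorics.Permutations"
begin

definition in_T_lambda :: "(nat \<Rightarrow> nat) \<Rightarrow> bool" where
  "in_T_lambda F \<longleftrightarrow> (\<forall>n\<ge>1. F n \<ge> 1) \<and>
     (\<exists>lK lM :: nat \<Rightarrow> nat \<Rightarrow> nat.
        \<forall>k\<ge>1. \<forall>m\<ge>1. F (k + m) = lK k m * F k + lM k m * F m)"

text \<open>Cartesian product A_1 x ... x A_n, tuples as lists; list position i carries coordinate s = i+1.\<close>
definition prod_sets :: "nat \<Rightarrow> (nat \<Rightarrow> nat set) \<Rightarrow> nat list set" where
  "prod_sets n A = {xs. length xs = n \<and> (\<forall>i<n. xs ! i \<in> A (Suc i))}"

definition F_box :: "(nat \<Rightarrow> nat) \<Rightarrow> nat \<Rightarrow> nat list set" where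
  "F_box F n = prod_sets n (\<lambda>s. {1..F s})"

text \<open>L^0 = (1,...,b_1,1,...,b_2,...,1,...,b_k), stored 0-indexed.\<close>
definition L0 :: "nat list \<Rightarrow> nat list" where
  "L0 bs = concat (map (\<lambda>b. [1..<Suc b]) bs)"

definition is_multiblock :: "(nat \<Rightarrow> nat) \<Rightarrow> nat list \<Rightarrow> (nat \<Rightarrow> nat) \<Rightarrow> nat list set \<Rightarrow> bool" where
  "is_multiblock F bs \<sigma> B \<longleftrightarrow> (let n = sum_list bs in
     \<sigma> permutes {1..n} \<and>
     (\<exists>A. (\<forall>s\<in>{1..n}. A s \<subseteq> {1..F s} \<and> card (A s) = F (L0 bs ! (\<sigma> s - 1)))
          \<and> B = prod_sets n A))"

end

theory Submission
  imports Defs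
begin

definition tiling :: "nat set \<Rightarrow> (nat \<Rightarrow> nat set) \<Rightarrow> (nat \<Rightarrow> nat set) set \<Rightarrow> bool" where
  "tiling S R T \<longleftrightarrow> (\<forall>A\<in>T. \<forall>s\<in>S. A s \<subseteq> R s) \<and>
     (\<forall>x. (\<forall>s\<in>S. x s \<in> R s) \<longrightarrow> (\<exists>!A. A \<in> T \<and> (\<forall>s\<in>S. x s \<in> A s)))"

lemma tiling_single: "tiling S R {R}"
  unfolding tiling_def by auto

lemma tiling_union:
  assumes s0: "s0 \<in> S" and pd: "pairwise disjnt CC" and un: "\<Union>CC = R s0"
    and T: "\<And>C. C \<in> CC \<Longrightarrow> tiling S (R(s0 := C)) (T C)"
  shows "tiling S R (\<Union>C\<in>CC. T C)"
  unfolding tiling_def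
proof (intro conjI allI impI ballI)
  fix A s assume A: "A \<in> (\<Union>C\<in>CC. T C)" and s: "s \<in> S"
  then obtain C where C: "C \<in> CC" "A \<in> T C" by auto
  have "A s \<subseteq> (R(s0 := C)) s" using T[OF C(1)] C(2) s unfolding tiling_def by blast
  also have "\<dots> \<subseteq> R s" using C(1) un by auto
  finally show "A s \<subseteq> R s" .
next
  fix x assume x: "\<forall>s\<in>S. x s \<in> R s"
  then obtain C where C: "C \<in> CC" "x s0 \<in> C" using s0 un by auto
  have xC: "\<forall>s\<in>S. x s \<in> (R(s0 := C)) s" using x C by auto
  then obtain A where A: "A \<in> T C" "\<forall>s\<in>S. x s \<in> A s"
    and uq: "\<And>A'. A' \<in> T C \<Longrightarrow> \<forall>s\<in>S. x s \<in> A' s \<Longrightarrow> A' = A"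
    using T[OF C(1)] unfolding tiling_def by metis
  show "\<exists>!A. A \<in> (\<Union>C\<in>CC. T C) \<and> (\<forall>s\<in>S. x s \<in> A s)"
  proof (rule ex1I[of _ A])
    show "A \<in> (\<Union>C\<in>CC. T C) \<and> (\<forall>s\<in>S. x s \<in> A s)" using A C by auto
  next
    fix A' assume A': "A' \<in> (\<Union>C\<in>CC. T C) \<and> (\<forall>s\<in>S. x s \<in> A' s)"
    then obtain C' where C': "C' \<in> CC" "A' \<in> T C'" by auto
    have "A' s0 \<subseteq> (R(s0 := C')) s0" using T[OF C'(1)] C'(2) s0 unfolding tiling_def by blast
    hence "x s0 \<in> C'" using A' s0 by auto
    hence "C' = C" using pd C C' unfolding pairwise_def disjnt_def by blast
    thus "A' = A" using uq C' A' by auto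
  qed
qed

lemma tiling_extend:
  assumes T: "tiling S R T" and s0: "s0 \<notin> S"
  shows "tiling (insert s0 S) R ((\<lambda>A. A(s0 := R s0)) ` T)"
  unfolding tiling_def
proof (intro conjI allI impI ballI)
  fix A s assume "A \<in> (\<lambda>A. A(s0 := R s0)) ` T" "s \<in> insert s0 S"
  then obtain A' where "A' \<in> T" "A = A'(s0 := R s0)" by auto
  moreover have "\<forall>s\<in>S. A' s \<subseteq> R s" using T \<open>A' \<in> T\<close> unfolding tiling_def by blast
  ultimately show "A s \<subseteq> R s" using \<open>s \<in> insert s0 S\<close> by auto
next
  fix x assume x: "\<forall>s\<in>insert s0 S. x s \<in> R s"
  then obtain A where A: "A \<in> T" "\<forall>s\<in>S. x s \<in> A s"
    and uq: "\<And>A'. A' \<in> T \<Longrightarrow> \<forall>s\<in>S. x s \<in> A' s \<Longrightarrow> A' = A"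
    using T unfolding tiling_def by (metis insert_iff)
  show "\<exists>!B. B \<in> (\<lambda>A. A(s0 := R s0)) ` T \<and> (\<forall>s\<in>insert s0 S. x s \<in> B s)"
  proof (rule ex1I[of _ "A(s0 := R s0)"])
    show "A(s0 := R s0) \<in> (\<lambda>A. A(s0 := R s0)) ` T \<and> (\<forall>s\<in>insert s0 S. x s \<in> (A(s0 := R s0)) s)"
      using A x by auto
  next
    fix B assume B: "B \<in> (\<lambda>A. A(s0 := R s0)) ` T \<and> (\<forall>s\<in>insert s0 S. x s \<in> B s)"
    then obtain A' where A': "A' \<in> T" "B = A'(s0 := R s0)" by auto
    have "\<forall>s\<in>S. x s \<in> A' s" using B A' s0 by (metis fun_upd_other insert_iff)
    thus "B = A(s0 := R s0)" using uq A' by auto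
  qed
qed

definition merge :: "nat set \<Rightarrow> (nat \<Rightarrow> nat set) \<Rightarrow> (nat \<Rightarrow> nat set) \<Rightarrow> nat \<Rightarrow> nat set" where
  "merge S1 A1 A2 = (\<lambda>s. if s \<in> S1 then A1 s else A2 s)"

lemma tiling_prod:
  assumes T1: "tiling S1 R T1" and T2: "tiling S2 R T2" and dj: "S1 \<inter> S2 = {}"
  shows "tiling (S1 \<union> S2) R {merge S1 A1 A2 | A1 A2. A1 \<in> T1 \<and> A2 \<in> T2}"
  unfolding tiling_def
proof (intro conjI allI impI ballI)
  fix A s assume "A \<in> {merge S1 A1 A2 | A1 A2. A1 \<in> T1 \<and> A2 \<in> T2}" "s \<in> S1 \<union> S2"
  then obtain A1 A2 where "A = merge S1 A1 A2" "A1 \<in> T1" "A2 \<in> T2" by auto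
  moreover have "\<forall>s\<in>S1. A1 s \<subseteq> R s" using T1 \<open>A1 \<in> T1\<close> unfolding tiling_def by blast
  moreover have "\<forall>s\<in>S2. A2 s \<subseteq> R s" using T2 \<open>A2 \<in> T2\<close> unfolding tiling_def by blast
  ultimately show "A s \<subseteq> R s" using \<open>s \<in> S1 \<union> S2\<close> unfolding merge_def by auto
next
  fix x assume x: "\<forall>s\<in>S1 \<union> S2. x s \<in> R s"
  obtain A1 where A1: "A1 \<in> T1" "\<forall>s\<in>S1. x s \<in> A1 s"
    and uq1: "\<And>A'. A' \<in> T1 \<Longrightarrow> \<forall>s\<in>S1. x s \<in> A' s \<Longrightarrow> A' = A1"
    using T1 x unfolding tiling_def by (metis Un_iff)
  obtain A2 where A2: "A2 \<in> T2" "\<forall>s\<in>S2. x s \<in> A2 s"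
    and uq2: "\<And>A'. A' \<in> T2 \<Longrightarrow> \<forall>s\<in>S2. x s \<in> A' s \<Longrightarrow> A' = A2"
    using T2 x unfolding tiling_def by (metis Un_iff)
  show "\<exists>!A. A \<in> {merge S1 A1 A2 | A1 A2. A1 \<in> T1 \<and> A2 \<in> T2} \<and> (\<forall>s\<in>S1 \<union> S2. x s \<in> A s)"
  proof (rule ex1I[of _ "merge S1 A1 A2"])
    show "merge S1 A1 A2 \<in> {merge S1 A1 A2 | A1 A2. A1 \<in> T1 \<and> A2 \<in> T2} \<and> (\<forall>s\<in>S1 \<union> S2. x s \<in> merge S1 A1 A2 s)"
      using A1 A2 unfolding merge_def by auto
  next
    fix B assume B: "B \<in> {merge S1 A1 A2 | A1 A2. A1 \<in> T1 \<and> A2 \<in> T2} \<and> (\<forall>s\<in>S1 \<union> S2. x s \<in> B s)"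
    then obtain B1 B2 where Bs: "B = merge S1 B1 B2" "B1 \<in> T1" "B2 \<in> T2" by auto
    have xB: "\<forall>s\<in>S1 \<union> S2. x s \<in> B s" using B by blast
    have "\<forall>s\<in>S1. x s \<in> B1 s"
    proof
      fix s assume "s \<in> S1" thus "x s \<in> B1 s" using xB[rule_format, of s] Bs(1) unfolding merge_def by simp
    qed
    hence "B1 = A1" using uq1 Bs by auto
    moreover have "\<forall>s\<in>S2. x s \<in> B2 s"
    proof
      fix s assume "s \<in> S2" thus "x s \<in> B2 s" using xB[rule_format, of s] Bs(1) dj unfolding merge_def by (auto split: if_splits)
    qed
    hence "B2 = A2" using uq2 Bs by auto
    ultimately show "B = merge S1 A1 A2" using Bs by simp
  qed
qed

lemma chunk_step:
  fixes X :: "'a set"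
  assumes "finite X" "c \<le> card X" "c = a \<or> c = b"
    and IH: "\<And>Z::'a set. finite Z \<Longrightarrow> card Z = card X - c \<Longrightarrow>
       \<exists>CC. pairwise disjnt CC \<and> \<Union>CC = Z \<and> (\<forall>C\<in>CC. card C = a \<or> card C = b)"
  shows "\<exists>CC. pairwise disjnt CC \<and> \<Union>CC = X \<and> (\<forall>C\<in>CC. card C = a \<or> card C = b)"
proof -
  obtain Y where Y: "Y \<subseteq> X" "card Y = c" using obtain_subset_with_card_n[OF assms(2)] by blast
  have cXY: "card (X - Y) = card X - c" proof -
    have "finite Y" using Y(1) assms(1) by (rule finite_subset)
    thus ?thesis using Y card_Diff_subset by metis
  qed
  have fXY: "finite (X - Y)" using assms(1) by simp
  obtain CC where CC: "pairwise disjnt CC" "\<Union>CC = X - Y" "\<forall>C\<in>CC. card C = a \<or> card C = b"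
    using IH[OF fXY cXY] by blast
  have "pairwise disjnt (insert Y CC)"
    unfolding pairwise_insert using CC(1,2) by (auto simp: disjnt_def)
  moreover have "\<Union>(insert Y CC) = X" using CC(2) Y(1) by auto
  moreover have "\<forall>C\<in>insert Y CC. card C = a \<or> card C = b" using CC(3) Y(2) assms(3) by auto
  ultimately show ?thesis by blast
qed

lemma chunks:
  fixes X :: "'a set"
  assumes "finite X" "card X = \<alpha> * a + \<beta> * b"
  shows "\<exists>CC. pairwise disjnt CC \<and> \<Union>CC = X \<and> (\<forall>C\<in>CC. card C = a \<or> card C = b)"
  using assms
proof (induction \<alpha> arbitrary: X)
  case 0
  then show ?case
  proof (induction \<beta> arbitrary: X)
    case 0
    then show ?case by (intro exI[of _ "{}"]) auto
  next
    case (Suc \<beta>)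
    show ?case
    proof (rule chunk_step[of X b])
      fix Z :: "'a set" assume "finite Z" "card Z = card X - b"
      thus "\<exists>CC. pairwise disjnt CC \<and> \<Union>CC = Z \<and> (\<forall>C\<in>CC. card C = a \<or> card C = b)"
        using Suc.IH[of Z] Suc.prems by simp
    qed (use Suc.prems in auto)
  qed
next
  case (Suc \<alpha>)
  show ?case
  proof (rule chunk_step[of X a])
    fix Z :: "'a set" assume "finite Z" "card Z = card X - a"
    thus "\<exists>CC. pairwise disjnt CC \<and> \<Union>CC = Z \<and> (\<forall>C\<in>CC. card C = a \<or> card C = b)"
      using Suc.IH[of Z] Suc.prems by simp
  qed (use Suc.prems in auto)
qed

lemma bij_upd:
  assumes "bij_betw f (S - {s0}) B" "s0 \<in> S" "y \<notin> B"
  shows "bij_betw (f(s0 := y)) S (insert y B)"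
proof -
  have "bij_betw (f(s0 := y)) (S - {s0}) B"
    using assms(1) by (rule bij_betw_cong[THEN iffD1, rotated]) auto
  moreover have "bij_betw (f(s0 := y)) {s0} {y}" by auto
  ultimately have "bij_betw (f(s0 := y)) ((S - {s0}) \<union> {s0}) (B \<union> {y})"
    using assms(3) by (intro bij_betw_combine) auto
  moreover have "(S - {s0}) \<union> {s0} = S" "B \<union> {y} = insert y B" using assms(2) by auto
  ultimately show ?thesis by simp
qed

lemma tiling_cong:
  assumes "tiling S R T" "\<And>s. s \<in> S \<Longrightarrow> R s = R' s"
  shows "tiling S R' T"
  using assms unfolding tiling_def by simp

lemma layer:
  fixes F :: "nat \<Rightarrow> nat" and lK lM :: "nat \<Rightarrow> nat \<Rightarrow> nat"
  assumes FT: "\<forall>k\<ge>1. \<forall>m\<ge>1. F (k + m) = lK k m * F k + lM k m * F m"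
  shows "bij_betw \<pi> S {m+1..m+k} \<Longrightarrow> (\<forall>s\<in>S. finite (R s) \<and> card (R s) = F (\<pi> s)) \<Longrightarrow>
    \<exists>T. tiling S R T \<and> (\<forall>A\<in>T. \<exists>\<tau>. bij_betw \<tau> S {1..k} \<and> (\<forall>s\<in>S. card (A s) = F (\<tau> s)))"
proof (induction k arbitrary: m S \<pi> R)
  case 0
  then have "S = {}" using bij_betw_empty2 by fastforce
  then show ?case using tiling_single by (intro exI[of _ "{R}"]) auto
next
  case (Suc k)
  note IHk = Suc.IH
  have "\<And>S \<pi> R. bij_betw \<pi> S {m+1..m+Suc k} \<Longrightarrow> (\<forall>s\<in>S. finite (R s) \<and> card (R s) = F (\<pi> s)) \<Longrightarrow>
    \<exists>T. tiling S R T \<and> (\<forall>A\<in>T. \<exists>\<tau>. bij_betw \<tau> S {1..Suc k} \<and> (\<forall>s\<in>S. card (A s) = F (\<tau> s)))"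
  proof (induction m)
    case 0
    then show ?case using tiling_single by (intro exI[of _ "{R}"]) auto
  next
    case (Suc m)
    note IHm = Suc.IH
    define M where "M = Suc m"
    define K where "K = Suc k"
    have bij: "bij_betw \<pi> S {M+1..M+K}" using Suc.prems(1) unfolding M_def K_def by simp
    have RR: "\<forall>s\<in>S. finite (R s) \<and> card (R s) = F (\<pi> s)" using Suc.prems(2) .
    define s0 where "s0 = inv_into S \<pi> (M+K)"
    have MK: "M + K \<in> {M+1..M+K}" unfolding K_def by simp
    have s0S: "s0 \<in> S" unfolding s0_def using bij MK
      by (metis bij_betw_def inv_into_into)
    have pis0: "\<pi> s0 = M + K" unfolding s0_def using bij MK
      by (metis bij_betw_def f_inv_into_f)
    have bij': "bij_betw \<pi> (S - {s0}) {M+1..M+k}"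
    proof -
      have "bij_betw \<pi> (S - {s0}) ({M+1..M+K} - {M+K})"
        using bij s0S pis0 MK by (intro bij_betw_DiffI) auto
      moreover have "{M+1..M+K} - {M+K} = {M+1..M+k}" unfolding K_def by auto
      ultimately show ?thesis by simp
    qed
    have cs0: "card (R s0) = lK K M * F K + lM K M * F M"
      using RR s0S pis0 FT unfolding M_def K_def by (metis add.commute le_add1 plus_1_eq_Suc)
    have fs0: "finite (R s0)" using RR s0S by blast
    obtain CC where CC: "pairwise disjnt CC" "\<Union>CC = R s0" "\<forall>C\<in>CC. card C = F K \<or> card C = F M"
      using chunks[OF fs0 cs0] by blast
    have "\<forall>C\<in>CC. \<exists>T. tiling S (R(s0 := C)) T \<and>
       (\<forall>A\<in>T. \<exists>\<tau>. bij_betw \<tau> S {1..Suc k} \<and> (\<forall>s\<in>S. card (A s) = F (\<tau> s)))"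
    proof
      fix C assume C: "C \<in> CC"
      show "\<exists>T. tiling S (R(s0 := C)) T \<and>
       (\<forall>A\<in>T. \<exists>\<tau>. bij_betw \<tau> S {1..Suc k} \<and> (\<forall>s\<in>S. card (A s) = F (\<tau> s)))"
      proof (cases "card C = F K")
        case True
        have "\<forall>s\<in>S - {s0}. finite (R s) \<and> card (R s) = F (\<pi> s)" using RR by blast
        from IHk[OF bij' this] obtain T' where T': "tiling (S - {s0}) R T'"
          "\<forall>A\<in>T'. \<exists>\<tau>. bij_betw \<tau> (S - {s0}) {1..k} \<and> (\<forall>s\<in>S - {s0}. card (A s) = F (\<tau> s))"
          by blast
        have "tiling (S - {s0}) (R(s0 := C)) T'" using T'(1) by (rule tiling_cong) auto
        from tiling_extend[OF this, of s0] have
          "tiling (insert s0 (S - {s0})) (R(s0 := C)) ((\<lambda>A. A(s0 := C)) ` T')" by simp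
        moreover have "insert s0 (S - {s0}) = S" using s0S by auto
        ultimately have til: "tiling S (R(s0 := C)) ((\<lambda>A. A(s0 := C)) ` T')" by simp
        have "\<forall>A\<in>(\<lambda>A. A(s0 := C)) ` T'. \<exists>\<tau>. bij_betw \<tau> S {1..Suc k} \<and> (\<forall>s\<in>S. card (A s) = F (\<tau> s))"
        proof
          fix A assume "A \<in> (\<lambda>A. A(s0 := C)) ` T'"
          then obtain A' where A': "A' \<in> T'" "A = A'(s0 := C)" by auto
          then obtain \<tau> where tau: "bij_betw \<tau> (S - {s0}) {1..k}" "\<forall>s\<in>S - {s0}. card (A' s) = F (\<tau> s)"
            using T'(2) by blast
          have "bij_betw (\<tau>(s0 := Suc k)) S (insert (Suc k) {1..k})"
            using tau(1) s0S by (intro bij_upd) auto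
          moreover have "insert (Suc k) {1..k} = {1..Suc k}" by auto
          moreover have "\<forall>s\<in>S. card (A s) = F ((\<tau>(s0 := Suc k)) s)"
            using tau(2) A'(2) True unfolding K_def by auto
          ultimately show "\<exists>\<tau>. bij_betw \<tau> S {1..Suc k} \<and> (\<forall>s\<in>S. card (A s) = F (\<tau> s))" by auto
        qed
        with til show ?thesis by blast
      next
        case False
        hence cC: "card C = F M" using CC(3) C by blast
        have fC: "finite C" using C CC(2) fs0 by (metis Union_upper finite_subset)
        have b1: "bij_betw (\<pi>(s0 := M)) S (insert M {M+1..M+k})"
          using bij' s0S by (intro bij_upd) auto
        have "insert M {M+1..M+k} = {m+1..m+Suc k}" unfolding M_def by auto
        with b1 have b2: "bij_betw (\<pi>(s0 := M)) S {m+1..m+Suc k}" by simp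
        have "\<forall>s\<in>S. finite ((R(s0 := C)) s) \<and> card ((R(s0 := C)) s) = F ((\<pi>(s0 := M)) s)"
          using RR fC cC by auto
        from IHm[OF b2 this] show ?thesis .
      qed
    qed
    then obtain Tf where Tf: "\<forall>C\<in>CC. tiling S (R(s0 := C)) (Tf C) \<and>
       (\<forall>A\<in>Tf C. \<exists>\<tau>. bij_betw \<tau> S {1..Suc k} \<and> (\<forall>s\<in>S. card (A s) = F (\<tau> s)))"
      by metis
    have "tiling S R (\<Union>C\<in>CC. Tf C)"
      using s0S CC(1,2) Tf by (intro tiling_union) auto
    moreover have "\<forall>A\<in>(\<Union>C\<in>CC. Tf C). \<exists>\<tau>. bij_betw \<tau> S {1..Suc k} \<and> (\<forall>s\<in>S. card (A s) = F (\<tau> s))"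
      using Tf by blast
    ultimately show ?case by blast
  qed
  then show ?case using Suc.prems by blast
qed

lemma length_L0: "length (L0 bs) = sum_list bs"
  by (induction bs) (simp_all add: L0_def)

lemma L0_snoc: "L0 (bs @ [b]) = L0 bs @ [1..<Suc b]"
  by (simp add: L0_def)

lemma shift_bij: "bij_betw ((+) (n::nat)) {1..b} {n+1..n+b}"
  by simp

lemma comp:
  fixes F :: "nat \<Rightarrow> nat" and lK lM :: "nat \<Rightarrow> nat \<Rightarrow> nat"
  assumes FT: "\<forall>k\<ge>1. \<forall>m\<ge>1. F (k + m) = lK k m * F k + lM k m * F m"
  shows "\<exists>T. tiling {1..sum_list bs} (\<lambda>s. {1..F s}) T \<and>
    (\<forall>A\<in>T. \<exists>\<sigma>. bij_betw \<sigma> {1..sum_list bs} {1..sum_list bs} \<and>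
        (\<forall>s\<in>{1..sum_list bs}. card (A s) = F (L0 bs ! (\<sigma> s - 1))))"
proof (induction bs rule: rev_induct)
  case Nil
  then show ?case using tiling_single by (intro exI[of _ "{\<lambda>s. {1..F s}}"]) auto
next
  case (snoc b bs)
  define n where "n = sum_list bs"
  obtain T1 where T1: "tiling {1..n} (\<lambda>s. {1..F s}) T1"
    "\<forall>A\<in>T1. \<exists>\<sigma>. bij_betw \<sigma> {1..n} {1..n} \<and> (\<forall>s\<in>{1..n}. card (A s) = F (L0 bs ! (\<sigma> s - 1)))"
    using snoc.IH unfolding n_def by blast
  have "bij_betw id {n+1..n+b} {n+1..n+b}" by simp
  moreover have "\<forall>s\<in>{n+1..n+b}. finite ({1..F s}) \<and> card {1..F s} = F (id s)" by simp
  ultimately obtain T2 where T2: "tiling {n+1..n+b} (\<lambda>s. {1..F s}) T2"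
    "\<forall>A\<in>T2. \<exists>\<tau>. bij_betw \<tau> {n+1..n+b} {1..b} \<and> (\<forall>s\<in>{n+1..n+b}. card (A s) = F (\<tau> s))"
    using layer[OF FT, of id "{n+1..n+b}" n b "\<lambda>s. {1..F s}"] by blast
  have dj: "{1..n} \<inter> {n+1..n+b} = {}" by auto
  have un: "{1..n} \<union> {n+1..n+b} = {1..sum_list (bs @ [b])}" unfolding n_def by auto
  have til: "tiling {1..sum_list (bs @ [b])} (\<lambda>s. {1..F s})
      {merge {1..n} A1 A2 | A1 A2. A1 \<in> T1 \<and> A2 \<in> T2}"
    using tiling_prod[OF T1(1) T2(1) dj] un by simp
  have "\<forall>A\<in>{merge {1..n} A1 A2 | A1 A2. A1 \<in> T1 \<and> A2 \<in> T2}. \<exists>\<sigma>.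
        bij_betw \<sigma> {1..sum_list (bs @ [b])} {1..sum_list (bs @ [b])} \<and>
        (\<forall>s\<in>{1..sum_list (bs @ [b])}. card (A s) = F (L0 (bs @ [b]) ! (\<sigma> s - 1)))"
  proof
    fix A assume "A \<in> {merge {1..n} A1 A2 | A1 A2. A1 \<in> T1 \<and> A2 \<in> T2}"
    then obtain A1 A2 where A: "A = merge {1..n} A1 A2" "A1 \<in> T1" "A2 \<in> T2" by auto
    obtain \<sigma> where sg: "bij_betw \<sigma> {1..n} {1..n}" "\<forall>s\<in>{1..n}. card (A1 s) = F (L0 bs ! (\<sigma> s - 1))"
      using T1(2) A(2) by blast
    obtain \<tau> where tau: "bij_betw \<tau> {n+1..n+b} {1..b}" "\<forall>s\<in>{n+1..n+b}. card (A2 s) = F (\<tau> s)"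
      using T2(2) A(3) by blast
    define \<sigma>' where "\<sigma>' = (\<lambda>s. if s \<le> n then \<sigma> s else n + \<tau> s)"
    have b1: "bij_betw \<sigma>' {1..n} {1..n}"
      using sg(1) by (rule bij_betw_cong[THEN iffD1, rotated]) (auto simp: \<sigma>'_def)
    have "bij_betw ((+) n \<circ> \<tau>) {n+1..n+b} {n+1..n+b}"
      using tau(1) shift_bij by (rule bij_betw_trans)
    hence b2: "bij_betw \<sigma>' {n+1..n+b} {n+1..n+b}"
      by (rule bij_betw_cong[THEN iffD1, rotated]) (auto simp: \<sigma>'_def)
    have "bij_betw \<sigma>' ({1..n} \<union> {n+1..n+b}) ({1..n} \<union> {n+1..n+b})"
      using b1 b2 dj by (rule bij_betw_combine)
    hence bij: "bij_betw \<sigma>' {1..sum_list (bs @ [b])} {1..sum_list (bs @ [b])}" using un by simp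
    have lenL: "length (L0 bs) = n" unfolding n_def by (rule length_L0)
    have "\<forall>s\<in>{1..sum_list (bs @ [b])}. card (A s) = F (L0 (bs @ [b]) ! (\<sigma>' s - 1))"
    proof
      fix s assume s: "s \<in> {1..sum_list (bs @ [b])}"
      show "card (A s) = F (L0 (bs @ [b]) ! (\<sigma>' s - 1))"
      proof (cases "s \<le> n")
        case True
        have "\<sigma> s \<in> {1..n}" using sg(1) True s by (auto simp: bij_betw_def)
        hence "L0 (bs @ [b]) ! (\<sigma>' s - 1) = L0 bs ! (\<sigma> s - 1)"
          unfolding L0_snoc \<sigma>'_def using True lenL by (auto simp: nth_append)
        thus ?thesis using sg(2) True s A(1) unfolding merge_def by auto
      next
        case False
        hence sS2: "s \<in> {n+1..n+b}" using s unfolding n_def by auto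
        have "\<tau> s \<in> {1..b}" using tau(1) sS2 by (auto simp: bij_betw_def)
        hence "L0 (bs @ [b]) ! (\<sigma>' s - 1) = \<tau> s"
          unfolding L0_snoc \<sigma>'_def using False lenL by (auto simp: nth_append)
        thus ?thesis using tau(2) False sS2 A(1) unfolding merge_def by auto
      qed
    qed
    with bij show "\<exists>\<sigma>. bij_betw \<sigma> {1..sum_list (bs @ [b])} {1..sum_list (bs @ [b])} \<and>
        (\<forall>s\<in>{1..sum_list (bs @ [b])}. card (A s) = F (L0 (bs @ [b]) ! (\<sigma> s - 1)))" by blast
  qed
  with til show ?case by blast
qed

lemma prod_sets_iff:
  "xs \<in> prod_sets n A \<longleftrightarrow> length xs = n \<and> (\<forall>s\<in>{1..n}. xs ! (s - 1) \<in> A s)"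
proof -
  have "(\<forall>i<n. xs ! i \<in> A (Suc i)) \<longleftrightarrow> (\<forall>s\<in>{1..n}. xs ! (s - 1) \<in> A s)"
  proof
    assume H: "\<forall>i<n. xs ! i \<in> A (Suc i)"
    show "\<forall>s\<in>{1..n}. xs ! (s - 1) \<in> A s"
    proof
      fix s assume "s \<in> {1..n}"
      then obtain i where "s = Suc i" "i < n" by (cases s) auto
      thus "xs ! (s - 1) \<in> A s" using H by simp
    qed
  next
    assume H: "\<forall>s\<in>{1..n}. xs ! (s - 1) \<in> A s"
    show "\<forall>i<n. xs ! i \<in> A (Suc i)"
    proof (intro allI impI)
      fix i assume "i < n"
      thus "xs ! i \<in> A (Suc i)" using H[rule_format, of "Suc i"] by simp
    qed
  qed
  thus ?thesis unfolding prod_sets_def by blast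
qed

theorem theorem2:
  fixes F :: "nat \<Rightarrow> nat" and n :: nat and bs :: "nat list"
  assumes "in_T_lambda F"
    and "n \<ge> 1"
    and "\<forall>b\<in>set bs. b \<ge> 1"
    and "sum_list bs = n"
  shows "\<exists>P :: nat list set set.
           (\<forall>B\<in>P. \<exists>\<sigma>. is_multiblock F bs \<sigma> B) \<and>
           pairwise disjnt P \<and>
           \<Union>P = F_box F n"
proof -
  obtain lK lM :: "nat \<Rightarrow> nat \<Rightarrow> nat" where FT: "\<forall>k\<ge>1. \<forall>m\<ge>1. F (k + m) = lK k m * F k + lM k m * F m"
    using assms(1) unfolding in_T_lambda_def by blast
  define R where "R = (\<lambda>s::nat. {1..F s})"
  obtain T where T: "tiling {1..n} R T"
    "\<forall>A\<in>T. \<exists>\<sigma>. bij_betw \<sigma> {1..n} {1..n} \<and> (\<forall>s\<in>{1..n}. card (A s) = F (L0 bs ! (\<sigma> s - 1)))"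
    using comp[OF FT, of bs] assms(4) unfolding R_def by blast
  have sub: "\<And>A s. A \<in> T \<Longrightarrow> s \<in> {1..n} \<Longrightarrow> A s \<subseteq> R s" using T(1) unfolding tiling_def by blast
  have uq: "\<And>x. \<forall>s\<in>{1..n}. x s \<in> R s \<Longrightarrow> \<exists>!A. A \<in> T \<and> (\<forall>s\<in>{1..n}. x s \<in> A s)"
    using T(1) unfolding tiling_def by blast
  define P where "P = (\<lambda>A. prod_sets n A) ` T"
  have "\<forall>B\<in>P. \<exists>\<sigma>. is_multiblock F bs \<sigma> B"
  proof
    fix B assume "B \<in> P"
    then obtain A where A: "A \<in> T" "B = prod_sets n A" unfolding P_def by auto
    obtain \<sigma> where sg: "bij_betw \<sigma> {1..n} {1..n}" "\<forall>s\<in>{1..n}. card (A s) = F (L0 bs ! (\<sigma> s - 1))"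
      using T(2) A(1) by blast
    define \<sigma>' where "\<sigma>' = (\<lambda>s. if s \<in> {1..n} then \<sigma> s else s)"
    have "bij_betw \<sigma>' {1..n} {1..n}"
      using sg(1) by (rule bij_betw_cong[THEN iffD1, rotated]) (auto simp: \<sigma>'_def)
    moreover have "{x. \<sigma>' x \<noteq> x} \<subseteq> {1..n}" unfolding \<sigma>'_def by auto
    ultimately have perm: "\<sigma>' permutes {1..n}" unfolding permutes_altdef by blast
    have "\<forall>s\<in>{1..n}. A s \<subseteq> {1..F s} \<and> card (A s) = F (L0 bs ! (\<sigma>' s - 1))"
      using sub[OF A(1)] sg(2) unfolding R_def \<sigma>'_def by auto
    hence "is_multiblock F bs \<sigma>' B"
      unfolding is_multiblock_def Let_def assms(4) using perm A(2) by blast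
    thus "\<exists>\<sigma>. is_multiblock F bs \<sigma> B" by blast
  qed
  moreover have "pairwise disjnt P"
  proof (rule pairwiseI)
    fix B1 B2 assume B: "B1 \<in> P" "B2 \<in> P" "B1 \<noteq> B2"
    then obtain A1 A2 where A: "A1 \<in> T" "B1 = prod_sets n A1" "A2 \<in> T" "B2 = prod_sets n A2"
      unfolding P_def by auto
    show "disjnt B1 B2"
    proof (rule ccontr)
      assume "\<not> disjnt B1 B2"
      then obtain xs where xs: "xs \<in> B1" "xs \<in> B2" unfolding disjnt_def by auto
      define x where "x = (\<lambda>s. xs ! (s - 1))"
      have x1: "\<forall>s\<in>{1..n}. x s \<in> A1 s" using xs(1) unfolding A(2) prod_sets_iff x_def by blast
      have x2: "\<forall>s\<in>{1..n}. x s \<in> A2 s" using xs(2) unfolding A(4) prod_sets_iff x_def by blast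
      have "\<forall>s\<in>{1..n}. x s \<in> R s" using x1 sub[OF A(1)] by blast
      from uq[OF this] x1 x2 A(1,3) have "A1 = A2" by blast
      thus False using A B(3) by simp
    qed
  qed
  moreover have "\<Union>P = F_box F n"
  proof
    show "\<Union>P \<subseteq> F_box F n"
    proof
      fix xs assume "xs \<in> \<Union>P"
      then obtain A where A: "A \<in> T" "xs \<in> prod_sets n A" unfolding P_def by auto
      thus "xs \<in> F_box F n" using sub[OF A(1)] unfolding F_box_def prod_sets_iff R_def by blast
    qed
  next
    show "F_box F n \<subseteq> \<Union>P"
    proof
      fix xs assume xs: "xs \<in> F_box F n"
      define x where "x = (\<lambda>s. xs ! (s - 1))"
      have "\<forall>s\<in>{1..n}. x s \<in> R s" using xs unfolding F_box_def prod_sets_iff x_def R_def by blast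
      from uq[OF this] obtain A where "A \<in> T" "\<forall>s\<in>{1..n}. x s \<in> A s" by blast
      moreover have "length xs = n" using xs unfolding F_box_def prod_sets_iff by blast
      ultimately have "xs \<in> prod_sets n A" unfolding prod_sets_iff x_def by blast
      thus "xs \<in> \<Union>P" using \<open>A \<in> T\<close> unfolding P_def by blast
    qed
  qed
  ultimately show ?thesis by blast
qed

end
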